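(* Assume all jobs have the same processing time, i.e. $p_j=1$ for all $j\in[n]$. Run IPR with $\rho=2$, and for each iteration $i$ of the while loop let $b^{(i)}_{\min}$ be the minimum of $p(B)$ over all bags in the tentative assignment at the start of iteration $i$. Then at each iteration $i$ (such that iteration $i+1$ is executed), $b^{(i+1)}_{\min}\ge b^{(i)}_{\min}$.
   Context: Jobs $j\in[n]$ have processing times $p_j\ge0$; for a bag $B$, $p(B)=\sum_{j\in B}p_j$. There are $m$ machines with predicted speeds $\hat s_1\ge\dots\ge\hat s_m$; $opt(\mathbf p,\hat{\mathbf s})$ is the minimum makespan $\max_i(\text{load of } i)/\hat s_i$ of assigning jobs to machines with speeds $\hat{\mathbf s}$. Algorithm IPR. Input: $\hat{\mathbf s}$, $\mathbf p$, $\alpha\in(0,1)$, accuracy $\epsilon\in(0,1)$, $\rho\ge1$. (1) Compute a partition $B_1,\dots,B_m$ with $p(B_1)\ge\dots\ge p(B_m)$ such that putting $B_i$ on machine $i$ has makespan at most $(1+\epsilon)opt(\mathbf p,\hat{\mathbf s})$ under speeds $\hat{\mathbf s}$. (2) Set $\overline{OPT}_C=\max_i p(B_i)/\hat s_i$ and tentative assignment $\mathcal M_i=\{B_i\}$. (3) While $\max\{p(B): B\in\cup_i\mathcal M_i, |B|\ge2\}>\rho\min\{p(B):B\in\cup_i\mathcal M_i\}$ (each execution of the loop body is an iteration): compute $\mathcal M'=$ LPT-Rebalance$(\mathcal M)$; if $\max_i\sum_{B\in\mathcal M'_i}p(B)/\hat s_i>(1+\alpha)\overline{OPT}_C$ return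 the current bags $\cup_i\mathcal M_i$; else $\mathcal M\leftarrow\mathcal M'$. (4) Return the bags $\cup_i\mathcal M_i$. LPT-Rebalance: let $B_{\min}$ be a bag of minimum $p(B)$ over all bags, $\mathcal M_{\min}$ its collection, $\mathcal M_{\max}$ a collection containing a bag of maximum $p(B)$ among bags with at least two jobs. Move $B_{\min}$ into $\mathcal M_{\max}$, let $\ell=|\mathcal M_{\max}|$, pool its jobs and redistribute them into $\ell$ new bags by LPT (jobs in non-increasing processing time, each into a currently least-loaded bag); these form the new $\mathcal M_{\max}$. *)

theory Defs
  imports Complex_Main "HOL-Library.Multiset" "HOL-Library.FuncSet"
begin

text \<open>Jobs are the naturals 0..<n, machines are 0..<m (machine i has predicted speed s i).
  A bag is a set of jobs; a tentative assignment maps each machine to a multiset of bags.\<close>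

definition pB :: "(nat \<Rightarrow> real) \<Rightarrow> nat set \<Rightarrow> real" where
  "pB p B = (\<Sum>j\<in>B. p j)"

definition opt :: "(nat \<Rightarrow> real) \<Rightarrow> (nat \<Rightarrow> real) \<Rightarrow> nat \<Rightarrow> nat \<Rightarrow> real" where
  "opt p s n m = Min {Max {(\<Sum>j\<in>{j. j < n \<and> f j = i}. p j) / s i | i. i < m} | f.
                       f \<in> {0..<n} \<rightarrow>\<^sub>E {0..<m}}"

definition bags :: "(nat \<Rightarrow> nat set multiset) \<Rightarrow> nat \<Rightarrow> nat set multiset" where
  "bags M m = (\<Sum>i<m. M i)"

definition min_bag :: "(nat \<Rightarrow> real) \<Rightarrow> (nat \<Rightarrow> nat set multiset) \<Rightarrow> nat \<Rightarrow> real" where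
  "min_bag p M m = Min (pB p ` set_mset (bags M m))"

definition max_multi_bag :: "(nat \<Rightarrow> real) \<Rightarrow> (nat \<Rightarrow> nat set multiset) \<Rightarrow> nat \<Rightarrow> real" where
  "max_multi_bag p M m = Max (pB p ` {B \<in> set_mset (bags M m). card B \<ge> 2})"

definition loop_cond :: "(nat \<Rightarrow> real) \<Rightarrow> real \<Rightarrow> (nat \<Rightarrow> nat set multiset) \<Rightarrow> nat \<Rightarrow> bool" where
  "loop_cond p \<rho> M m \<longleftrightarrow>
     (\<exists>B\<in>#bags M m. card B \<ge> 2) \<and> max_multi_bag p M m > \<rho> * min_bag p M m"

definition makespan :: "(nat \<Rightarrow> real) \<Rightarrow> (nat \<Rightarrow> real) \<Rightarrow> (nat \<Rightarrow> nat set multiset) \<Rightarrow> nat \<Rightarrow> real" where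
  "makespan p s M m = Max {(\<Sum>B\<in>#M i. pB p B) / s i | i. i < m}"

text \<open>LPT run: jobs processed in the given order, each put into a currently least-loaded bag
  (ties broken arbitrarily, hence a relation).\<close>
inductive lpt_run :: "(nat \<Rightarrow> real) \<Rightarrow> nat list \<Rightarrow> nat set list \<Rightarrow> nat set list \<Rightarrow> bool"
  for p where
  lpt_nil: "lpt_run p [] Bs Bs"
| lpt_cons: "\<lbrakk>k < length Bs; \<forall>k'<length Bs. pB p (Bs ! k) \<le> pB p (Bs ! k');
             lpt_run p js (Bs[k := insert j (Bs ! k)]) Bs'\<rbrakk> \<Longrightarrow> lpt_run p (j # js) Bs Bs'"

definition LPT :: "(nat \<Rightarrow> real) \<Rightarrow> nat set \<Rightarrow> nat \<Rightarrow> nat set multiset \<Rightarrow> bool" where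
  "LPT p J l N \<longleftrightarrow> (\<exists>js Bs. distinct js \<and> set js = J \<and> sorted_wrt (\<lambda>a b. p a \<ge> p b) js
       \<and> lpt_run p js (replicate l {}) Bs \<and> N = mset Bs)"

text \<open>LPT-Rebalance (as a relation: choices of B_min, M_max and LPT ties are arbitrary).\<close>
definition lpt_rebalance :: "(nat \<Rightarrow> real) \<Rightarrow> nat \<Rightarrow> (nat \<Rightarrow> nat set multiset)
    \<Rightarrow> (nat \<Rightarrow> nat set multiset) \<Rightarrow> bool" where
  "lpt_rebalance p m M M' \<longleftrightarrow> (\<exists>i0 i1 Bmin Bmax N.
     i0 < m \<and> i1 < m \<and> Bmin \<in># M i0 \<and> pB p Bmin = min_bag p M m \<and>
     Bmax \<in># M i1 \<and> card Bmax \<ge> 2 \<and> pB p Bmax = max_multi_bag p M m \<and>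
     (let M1 = M(i0 := M i0 - {#Bmin#});
          M2 = M1(i1 := M1 i1 + {#Bmin#})
      in LPT p (\<Union>(set_mset (M2 i1))) (size (M2 i1)) N \<and> M' = M2(i1 := N)))"

definition initial_partition :: "(nat \<Rightarrow> real) \<Rightarrow> (nat \<Rightarrow> real) \<Rightarrow> nat \<Rightarrow> nat \<Rightarrow> real
    \<Rightarrow> (nat \<Rightarrow> nat set) \<Rightarrow> bool" where
  "initial_partition p s n m \<epsilon> B \<longleftrightarrow>
     (\<forall>i<m. \<forall>i'<m. i \<noteq> i' \<longrightarrow> B i \<inter> B i' = {}) \<and> (\<Union>i<m. B i) = {0..<n} \<and>
     (\<forall>i<m. \<forall>i'<m. i \<le> i' \<longrightarrow> pB p (B i) \<ge> pB p (B i')) \<and>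
     (\<forall>i<m. pB p (B i) / s i \<le> (1 + \<epsilon>) * opt p s n m)"

definition init_assign :: "nat \<Rightarrow> (nat \<Rightarrow> nat set) \<Rightarrow> nat \<Rightarrow> nat set multiset" where
  "init_assign m B = (\<lambda>i. if i < m then {#B i#} else {#})"

definition OPTC :: "(nat \<Rightarrow> real) \<Rightarrow> (nat \<Rightarrow> real) \<Rightarrow> nat \<Rightarrow> (nat \<Rightarrow> nat set) \<Rightarrow> real" where
  "OPTC p s m B = Max {pB p (B i) / s i | i. i < m}"

text \<open>Ms is a run of the while loop of IPR in which the first k iterations were executed and
  accepted (Ms t is the tentative assignment at the start of iteration t, 0-indexed).\<close>
definition ipr_run :: "(nat \<Rightarrow> real) \<Rightarrow> (nat \<Rightarrow> real) \<Rightarrow> nat \<Rightarrow> nat \<Rightarrow> real \<Rightarrow> real \<Rightarrow> real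
    \<Rightarrow> (nat \<Rightarrow> nat set) \<Rightarrow> (nat \<Rightarrow> nat \<Rightarrow> nat set multiset) \<Rightarrow> nat \<Rightarrow> bool" where
  "ipr_run p s n m \<alpha> \<epsilon> \<rho> B Ms k \<longleftrightarrow>
     initial_partition p s n m \<epsilon> B \<and> Ms 0 = init_assign m B \<and>
     (\<forall>t<k. loop_cond p \<rho> (Ms t) m \<and> lpt_rebalance p m (Ms t) (Ms (Suc t)) \<and>
            makespan p s (Ms (Suc t)) m \<le> (1 + \<alpha>) * OPTC p s m B)"

end

theory Submission imports Defs begin

lemma sum_list_upd_nat:
  "k < length xs \<Longrightarrow> sum_list (xs[k:=x]) + xs!k = sum_list xs + (x::nat)"
  by (induction xs arbitrary: k) (auto split: nat.splits)

lemma union_upd: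
  "k < length Bs \<Longrightarrow> \<Union>(set (Bs[k := insert j (Bs!k)])) = insert j (\<Union>(set Bs))"
proof (induction Bs arbitrary: k)
  case Nil then show ?case by simp
next
  case (Cons a Bs) then show ?case by (cases k) auto
qed

lemma lpt_props:
  assumes "lpt_run p js Bs Bs'"
  shows "distinct js \<Longrightarrow> (\<forall>B\<in>set Bs. finite B \<and> B \<subseteq> S \<and> B \<inter> set js = {}) \<Longrightarrow> set js \<subseteq> S
   \<Longrightarrow> (\<forall>j\<in>S. p j = 1) \<Longrightarrow> (\<forall>i<length Bs. \<forall>k<length Bs. card (Bs!i) \<le> card (Bs!k) + 1) \<Longrightarrow>
   length Bs' = length Bs \<and> (\<forall>B\<in>set Bs'. finite B \<and> B \<subseteq> S) \<and> \<Union>(set Bs') = \<Union>(set Bs) \<union> set js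
   \<and> sum_list (map card Bs') = sum_list (map card Bs) + length js
   \<and> (\<forall>i<length Bs'. \<forall>k<length Bs'. card (Bs'!i) \<le> card (Bs'!k) + 1)"
  using assms
proof (induction rule: lpt_run.induct)
  case (lpt_nil Bs)
  then show ?case by simp
next
  case (lpt_cons k Bs js j Bs')
  have pc: "pB p B = real (card B)" if "B \<subseteq> S" "finite B" for B
    using that lpt_cons.prems(4) unfolding pB_def by (simp add: subset_eq)
  have Bk: "Bs!k \<in> set Bs" using lpt_cons.hyps(1) by simp
  have jn: "j \<notin> Bs!k" using lpt_cons.prems(2) Bk by auto
  have fk: "finite (Bs!k)" using lpt_cons.prems(2) Bk by auto
  have cardk: "card (insert j (Bs!k)) = card (Bs!k) + 1" using jn fk by simp
  have minc: "card (Bs!k) \<le> card (Bs!k')" if "k' < length Bs" for k'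
  proof -
    have "pB p (Bs!k) \<le> pB p (Bs!k')" using lpt_cons.hyps(2) that by blast
    moreover have "Bs!k' \<in> set Bs" using that by simp
    ultimately show ?thesis using pc lpt_cons.prems(2) Bk by auto
  qed
  let ?Bs2 = "Bs[k := insert j (Bs!k)]"
  have h2: "\<forall>B\<in>set ?Bs2. finite B \<and> B \<subseteq> S \<and> B \<inter> set js = {}"
  proof
    fix B assume "B \<in> set ?Bs2"
    then have "B \<in> set Bs \<or> B = insert j (Bs!k)"
      by (metis insert_iff set_update_subset_insert subsetD)
    then show "finite B \<and> B \<subseteq> S \<and> B \<inter> set js = {}"
      using lpt_cons.prems(1,2,3) Bk by auto
  qed
  have h5: "\<forall>i<length ?Bs2. \<forall>k'<length ?Bs2. card (?Bs2!i) \<le> card (?Bs2!k') + 1"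
  proof (intro allI impI)
    fix i k' assume a: "i < length ?Bs2" "k' < length ?Bs2"
    then show "card (?Bs2!i) \<le> card (?Bs2!k') + 1"
      using minc lpt_cons.prems(5) cardk
      apply (cases "i = k"; cases "k' = k")
         apply (auto simp: nth_list_update)
      by (metis le_SucI)
  qed
  have IH: "length Bs' = length ?Bs2 \<and> (\<forall>B\<in>set Bs'. finite B \<and> B \<subseteq> S) \<and> \<Union>(set Bs') = \<Union>(set ?Bs2) \<union> set js
   \<and> sum_list (map card Bs') = sum_list (map card ?Bs2) + length js
   \<and> (\<forall>i<length Bs'. \<forall>k<length Bs'. card (Bs'!i) \<le> card (Bs'!k) + 1)"
  proof (rule lpt_cons.IH)
    show "distinct js" using lpt_cons.prems(1) by simp
    show "set js \<subseteq> S" using lpt_cons.prems(3) by simp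
  qed (use lpt_cons.prems(4) h2 h5 in auto)
  have su: "sum_list (map card ?Bs2) + card (Bs!k) = sum_list (map card Bs) + card (insert j (Bs!k))"
    using sum_list_upd_nat[of k "map card Bs" "card (insert j (Bs!k))"] lpt_cons.hyps(1)
    by (simp add: map_update)
  show ?case using IH su cardk union_upd[OF lpt_cons.hyps(1)] by auto
qed


lemma bags_upd:
  assumes "i < m"
  shows "\<exists>R. bags f m = f i + R \<and> bags (f(i:=v)) m = v + R"
proof -
  define R where "R = (\<Sum>j\<in>{..<m}-{i}. f j)"
  have "bags f m = f i + R" unfolding bags_def R_def using assms
    by (simp add: sum.remove)
  moreover have "bags (f(i:=v)) m = v + R" unfolding bags_def R_def using assms
    by (simp add: sum.remove)
  ultimately show ?thesis by blast
qed

lemma card_Union_mset_le: "card (\<Union>(set_mset A)) \<le> sum_mset (image_mset card A)"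
proof (induction A)
  case empty then show ?case by simp
next
  case (add x A)
  have "card (\<Union>(set_mset (add_mset x A))) \<le> card x + card (\<Union>(set_mset A))"
    using card_Un_le[of x "\<Union>(set_mset A)"] by simp
  then show ?case using add by simp
qed

lemma disj_sub:
  assumes "card (\<Union>(set_mset (Y+R))) = sum_mset (image_mset card (Y+R))"
  shows "card (\<Union>(set_mset Y)) = sum_mset (image_mset card Y)"
proof -
  have "card (\<Union>(set_mset (Y+R))) \<le> card (\<Union>(set_mset Y)) + card (\<Union>(set_mset R))"
    using card_Un_le[of "\<Union>(set_mset Y)" "\<Union>(set_mset R)"] by simp
  then show ?thesis using assms card_Union_mset_le[of Y] card_Union_mset_le[of R] by simp
qed

lemma size_bound: "(\<forall>x\<in>#A. c \<le> f x) \<Longrightarrow> size A * c \<le> sum_mset (image_mset f A)"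
  by (induction A) auto

definition Inv :: "nat \<Rightarrow> nat set multiset \<Rightarrow> bool" where
  "Inv n X \<longleftrightarrow> (\<forall>B\<in>#X. B \<subseteq> {0..<n}) \<and> card (\<Union>(set_mset X)) = sum_mset (image_mset card X)"

lemma pB_card: "\<forall>j<n. p j = 1 \<Longrightarrow> B \<subseteq> {0..<n} \<Longrightarrow> pB p B = real (card B)"
  unfolding pB_def by (simp add: subset_eq)

lemma step:
  assumes p1: "\<forall>j<n. p j = 1" and inv: "Inv n (bags M m)" and reb: "lpt_rebalance p m M M'"
  shows "Inv n (bags M' m) \<and> min_bag p M m \<le> min_bag p M' m"
proof -
  obtain i0 i1 Bmin Bmax N where i0: "i0 < m" and i1: "i1 < m" and Bmin: "Bmin \<in># M i0"
    and bmin: "pB p Bmin = min_bag p M m"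
    and rest: "let M1 = M(i0 := M i0 - {#Bmin#});
          M2 = M1(i1 := M1 i1 + {#Bmin#})
      in LPT p (\<Union>(set_mset (M2 i1))) (size (M2 i1)) N \<and> M' = M2(i1 := N)"
    using reb unfolding lpt_rebalance_def by blast
  define M1 where "M1 = M(i0 := M i0 - {#Bmin#})"
  define M2 where "M2 = M1(i1 := M1 i1 + {#Bmin#})"
  define Y where "Y = M2 i1"
  have lm: "LPT p (\<Union>(set_mset (M2 i1))) (size (M2 i1)) N \<and> M' = M2(i1 := N)"
    using rest unfolding Let_def M2_def M1_def by blast
  have lpt: "LPT p (\<Union>(set_mset Y)) (size Y) N" and M': "M' = M2(i1 := N)"
    using lm unfolding Y_def by simp_all
  define X where "X = bags M m"
  obtain R0 where R0: "X = M i0 + R0" "bags M1 m = (M i0 - {#Bmin#}) + R0"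
    using bags_upd[OF i0, of M "M i0 - {#Bmin#}"] unfolding X_def M1_def by blast
  have X1: "X = bags M1 m + {#Bmin#}" using R0 Bmin
    by (metis add.commute add.left_commute insert_DiffM2 add_mset_add_single)
  obtain R1 where R1: "bags M1 m = M1 i1 + R1" "bags M2 m = (M1 i1 + {#Bmin#}) + R1"
    using bags_upd[OF i1, of M1 "M1 i1 + {#Bmin#}"] unfolding M2_def by blast
  have X2: "bags M2 m = X" using X1 R1 by (simp add: add.commute add.left_commute)
  obtain R where R: "bags M2 m = Y + R" "bags M' m = N + R"
    using bags_upd[OF i1, of M2 N] unfolding M' Y_def by blast
  have XYR: "X = Y + R" using X2 R by simp
  have BminY: "Bmin \<in># Y" unfolding Y_def M2_def by simp
  have invX: "\<forall>B\<in>#X. B \<subseteq> {0..<n}" "card (\<Union>(set_mset X)) = sum_mset (image_mset card X)"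
    using inv unfolding Inv_def X_def by auto
  have Ysub: "\<Union>(set_mset Y) \<subseteq> {0..<n}" using invX(1) XYR by auto
  have Ycard: "card (\<Union>(set_mset Y)) = sum_mset (image_mset card Y)"
    using disj_sub invX(2) XYR by blast
  obtain js Bs where js: "distinct js" "set js = \<Union>(set_mset Y)" and run: "lpt_run p js (replicate (size Y) {}) Bs"
    and N: "N = mset Bs"
    using lpt unfolding LPT_def by blast
  have LP: "length Bs = size Y \<and> (\<forall>B\<in>set Bs. finite B \<and> B \<subseteq> {0..<n}) \<and> \<Union>(set Bs) = \<Union>(set (replicate (size Y) {})) \<union> set js
   \<and> sum_list (map card Bs) = sum_list (map card (replicate (size Y) {})) + length js
   \<and> (\<forall>i<length Bs. \<forall>k<length Bs. card (Bs!i) \<le> card (Bs!k) + 1)"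
    using lpt_props[OF run, of "{0..<n}"] js Ysub p1 by auto
  have lenjs: "length js = card (\<Union>(set_mset Y))" using js distinct_card by metis
  have sumN: "sum_mset (image_mset card N) = sum_mset (image_mset card Y)"
  proof -
    have "sum_mset (image_mset card N) = sum_list (map card Bs)"
      unfolding N by (metis mset_map sum_mset_sum_list)
    then show ?thesis using LP lenjs Ycard by simp
  qed
  have UN: "\<Union>(set_mset N) = \<Union>(set_mset Y)" using LP js N by (simp add: set_replicate_conv_if)
  have inv': "Inv n (bags M' m)"
    unfolding Inv_def R(2)
  proof
    show "\<forall>B\<in>#N + R. B \<subseteq> {0..<n}" using LP N invX(1) XYR by auto
    have "card (\<Union>(set_mset (N + R))) = card (\<Union>(set_mset X))"
      using UN XYR by simp
    also have "\<dots> = sum_mset (image_mset card (N + R))" using invX(2) XYR sumN by simp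
    finally show "card (\<Union>(set_mset (N + R))) = sum_mset (image_mset card (N + R))" .
  qed
  define c where "c = card Bmin"
  have BminX: "Bmin \<in># X" using R0 Bmin by simp
  have bc: "min_bag p M m = real c" unfolding c_def using bmin[symmetric] pB_card[OF p1] invX(1) BminX by simp
  have geX: "pB p B \<ge> real c" if "B \<in># X" for B
    using that bc unfolding min_bag_def X_def[symmetric] by (metis Min_le finite_imageI finite_set_mset imageI)
  have geXc: "card B \<ge> c" if "B \<in># X" for B
    using geX[OF that] pB_card[OF p1] invX(1) that by simp
  have "size Y * c \<le> sum_mset (image_mset card Y)"
    using size_bound[of Y c card] geXc XYR by simp
  then have sumBs: "size Y * c \<le> sum_list (map card Bs)" using LP lenjs Ycard by simp
  have Bsge: "card (Bs!i) \<ge> c" if "i < length Bs" for i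
  proof (rule ccontr)
    assume "\<not> c \<le> card (Bs!i)"
    then have lt: "card (Bs!i) < c" by simp
    have "(\<Sum>l<length Bs. card (Bs!l) + (if l = i then 1 else 0)) \<le> (\<Sum>l<length Bs. c)"
    proof (rule sum_mono)
      fix l assume "l \<in> {..<length Bs}"
      then have "card (Bs!l) \<le> card (Bs!i) + 1" using LP that by auto
      then show "card (Bs!l) + (if l = i then 1 else 0) \<le> c" using lt by auto
    qed
    then have "sum_list (map card Bs) + 1 \<le> length Bs * c"
      using that by (simp add: sum.distrib sum_list_sum_nth atLeast0LessThan)
    then show False using sumBs LP by simp
  qed
  have Nge: "pB p B \<ge> real c" if "B \<in># N" for B
  proof -
    have "B \<in> set Bs" using that N by simp
    then obtain i where "i < length Bs" "B = Bs!i" by (metis in_set_conv_nth)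
    moreover have "B \<subseteq> {0..<n}" using LP that N by auto
    ultimately show ?thesis using Bsge pB_card[OF p1] by simp
  qed
  have ne: "set_mset (bags M' m) \<noteq> {}"
  proof -
    have "size Y \<ge> 1" using BminY by (metis One_nat_def Suc_le_eq size_eq_0_iff_empty empty_iff set_mset_empty not_gr_zero)
    then have "Bs \<noteq> []" using LP by auto
    then show ?thesis using R(2) N by auto
  qed
  have "min_bag p M m \<le> min_bag p M' m"
    unfolding min_bag_def[of p M'] bc
  proof (subst Min_ge_iff)
    show "finite (pB p ` set_mset (bags M' m))" by simp
    show "pB p ` set_mset (bags M' m) \<noteq> {}" using ne by simp
    show "\<forall>a\<in>pB p ` set_mset (bags M' m). real c \<le> a"
      using Nge geX XYR R(2) by auto
  qed
  then show ?thesis using inv' by simp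
qed


lemma set_mset_sum_single: "set_mset (\<Sum>i<(m::nat). {#f i#}) = f ` {..<m}"
  by (induction m) (auto simp: lessThan_Suc)

lemma sum_mset_sum_single: "sum_mset (image_mset g (\<Sum>i<(m::nat). {#f i#})) = (\<Sum>i<m. g (f i))"
  by (induction m) (auto simp: add.commute)

lemma init_inv:
  assumes "initial_partition p s n m \<epsilon> B"
  shows "Inv n (bags (init_assign m B) m)"
proof -
  have disj: "\<forall>i<m. \<forall>i'<m. i \<noteq> i' \<longrightarrow> B i \<inter> B i' = {}" and un: "(\<Union>i<m. B i) = {0..<n}"
    using assms unfolding initial_partition_def by auto
  have bg: "bags (init_assign m B) m = (\<Sum>i<m. {#B i#})"
    unfolding bags_def init_assign_def by (rule sum.cong) auto
  have sub: "B i \<subseteq> {0..<n}" if "i < m" for i using un that by blast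
  have "card (\<Union>i<m. B i) = (\<Sum>i<m. card (B i))"
  proof (rule card_UN_disjoint)
    show "\<forall>i\<in>{..<m}. finite (B i)" using sub by (meson finite_atLeastLessThan finite_subset lessThan_iff)
  qed (use disj in auto)
  then show ?thesis unfolding Inv_def bg set_mset_sum_single sum_mset_sum_single
    using sub by auto
qed

theorem lemma10:
  fixes n m :: nat and p s :: "nat \<Rightarrow> real" and \<alpha> \<epsilon> :: real
    and B :: "nat \<Rightarrow> nat set" and Ms :: "nat \<Rightarrow> nat \<Rightarrow> nat set multiset" and k :: nat
  assumes "m \<ge> 1"
    and "\<forall>i<m. s i > 0"
    and "\<forall>i<m. \<forall>i'<m. i \<le> i' \<longrightarrow> s i \<ge> s i'"
    and "0 < \<alpha>" "\<alpha> < 1" "0 < \<epsilon>" "\<epsilon> < 1"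
    and "\<forall>j<n. p j = 1"
    and "ipr_run p s n m \<alpha> \<epsilon> 2 B Ms (Suc k)"
    and "loop_cond p 2 (Ms (Suc k)) m"
  shows "min_bag p (Ms (Suc k)) m \<ge> min_bag p (Ms k) m"
proof -
  have ip: "initial_partition p s n m \<epsilon> B" and M0: "Ms 0 = init_assign m B"
    and stp: "\<forall>t<Suc k. lpt_rebalance p m (Ms t) (Ms (Suc t))"
    using assms(9) unfolding ipr_run_def by auto
  have "t \<le> k \<longrightarrow> Inv n (bags (Ms t) m)" for t
  proof (induction t)
    case 0 then show ?case using init_inv[OF ip] M0 by simp
  next
    case (Suc t) then show ?case using step[OF assms(8)] stp by auto
  qed
  then have "Inv n (bags (Ms k) m)" by simp
  then show ?thesis using step[OF assms(8)] stp by auto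
qed

end
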